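(* Let $\mathbf{c}\in\mathbb{R}^2$, let $\mathbf{e}_\pm$ be unit vectors with $\mathbf{e}_+\cdot\mathbf{e}_-=\cos(2\theta)$, $2\theta\in(0,2\pi)$, let $\Gamma:=\{\mathbf{c}+t\mathbf{e}_+:t\ge0\}\cup\{\mathbf{c}+t\mathbf{e}_-:t\ge0\}$, and let $\chi_{\mathrm{D}}\in\mathscr{C}^\infty(\mathbb{R}^2)$ be radially symmetric about $\mathbf{c}$, i.e. $\chi_{\mathrm{D}}(\mathbf{x})=\rho(|\mathbf{x}-\mathbf{c}|)$ for a smooth compactly supported radial profile $\rho$. Then there exists a cutoff function $\chi\in\mathscr{C}^\infty_{c}(\mathbb{R}_+)$, depending only on $\chi_{\mathrm{D}}$, such that for all $p,\tilde p,q,\tilde q\in\mathscr{C}^\infty_0(\mathbb{R}_+)$, $$\langle\mathscr{A}_\Gamma\,\chi_{\mathrm{D}}\Theta_\Gamma(p,\tilde p),\chi_{\mathrm{D}}\Theta_\Gamma(q,\tilde q)\rangle_\Gamma=\langle\mathscr{A}^+_\theta(\chi p),\chi q\rangle_{\mathbb{R}_+}+\langle\mathscr{A}^-_\theta(\chi\tilde p),\chi\tilde q\rangle_{\mathbb{R}_+}.$$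
   Context: $\mathscr{C}^\infty_0(\mathbb{R}_+)$: smooth functions on $[0,\infty)$ with bounded support contained in $(0,\infty)$; $\mathscr{C}^\infty_c(\mathbb{R}_+)$: restrictions to $\mathbb{R}_+$ of smooth functions on $\mathbb{R}$ with bounded support. $\Theta_\Gamma(p,\tilde p)(\mathbf{c}+t\mathbf{e}_\pm):=(p(t)\pm\tilde p(t))/\sqrt2$ for $t>0$. $\langle\mathscr{A}_\Gamma(u),v\rangle_\Gamma:=\int_{\Gamma\times\Gamma}u(\mathbf{y})v(\mathbf{x})|\mathbf{x}-\mathbf{y}|^{-1/2}\,d\mathbf{x}\,d\mathbf{y}$ (arc length). For $\alpha\in[0,2\pi)$, $\mathfrak{K}_\alpha(\tau):=(4\sin^2\alpha+(\sqrt\tau-1/\sqrt\tau)^2)^{-1/4}$, and $\langle\mathscr{A}^\pm_\theta(p),q\rangle_{\mathbb{R}_+}:=\int_{\mathbb{R}_+\times\mathbb{R}_+}(\mathfrak{K}_0(t/s)\pm\mathfrak{K}_\theta(t/s))p(s)q(t)(st)^{-1/4}\,ds\,dt$. *)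

theory Defs
  imports "HOL-Analysis.Analysis"
begin

coinductive C_inf :: "('a::real_normed_vector \<Rightarrow> real) \<Rightarrow> bool" where
  "(\<forall>x. f differentiable (at x)) \<Longrightarrow>
   (\<forall>v. C_inf (\<lambda>x. frechet_derivative f (at x) v)) \<Longrightarrow> C_inf f"

text \<open>Represented as functions on the whole real line that vanish outside a compact
  interval [a,b] with 0 < a (i.e. extended by zero to the left).\<close>
definition C0_inf_Rplus :: "(real \<Rightarrow> real) \<Rightarrow> bool" where
  "C0_inf_Rplus p \<longleftrightarrow> C_inf p \<and> (\<exists>a b. 0 < a \<and> (\<forall>t. p t \<noteq> 0 \<longrightarrow> a \<le> t \<and> t \<le> b))"

text \<open>C_c^infinity(R_+): restrictions to R_+ of smooth functions on R with bounded support.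
  Represented by the smooth function on R itself (only its values on t > 0 are used).\<close>
definition Cc_inf_Rplus :: "(real \<Rightarrow> real) \<Rightarrow> bool" where
  "Cc_inf_Rplus chi \<longleftrightarrow> C_inf chi \<and> bounded {t. chi t \<noteq> 0}"

definition ray_measure :: "real^2 \<Rightarrow> real^2 \<Rightarrow> (real^2) measure" where
  "ray_measure c e = distr (restrict_space lborel {0..}) borel (\<lambda>t. c + t *\<^sub>R e)"

text \<open>Arc-length measure on Gamma = union of the two rays (they meet only in c).\<close>
definition Gamma_measure :: "real^2 \<Rightarrow> real^2 \<Rightarrow> real^2 \<Rightarrow> (real^2) measure" where
  "Gamma_measure c ep em = measure_of UNIV (sets borel)
     (\<lambda>A. emeasure (ray_measure c ep) A + emeasure (ray_measure c em) A)"

definition A_Gamma_pair ::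
  "real^2 \<Rightarrow> real^2 \<Rightarrow> real^2 \<Rightarrow> (real^2 \<Rightarrow> real) \<Rightarrow> (real^2 \<Rightarrow> real) \<Rightarrow> real" where
  "A_Gamma_pair c ep em u v =
     (\<integral>z. u (snd z) * v (fst z) * norm (fst z - snd z) powr (-1/2)
        \<partial>(Gamma_measure c ep em \<Otimes>\<^sub>M Gamma_measure c ep em))"

text \<open>Theta_Gamma(p, pt)(c + t e_pm) = (p t \<plusminus> pt t)/sqrt 2 for t > 0 (value 0 elsewhere,
  which is irrelevant for the integrals).\<close>
definition Theta_Gamma ::
  "real^2 \<Rightarrow> real^2 \<Rightarrow> real^2 \<Rightarrow> (real \<Rightarrow> real) \<Rightarrow> (real \<Rightarrow> real) \<Rightarrow> real^2 \<Rightarrow> real" where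
  "Theta_Gamma c ep em p pt x =
     (if x \<noteq> c \<and> x = c + norm (x - c) *\<^sub>R ep then (p (norm (x - c)) + pt (norm (x - c))) / sqrt 2
      else if x \<noteq> c \<and> x = c + norm (x - c) *\<^sub>R em then (p (norm (x - c)) - pt (norm (x - c))) / sqrt 2
      else 0)"

definition frakK :: "real \<Rightarrow> real \<Rightarrow> real" where
  "frakK \<alpha> \<tau> = (4 * (sin \<alpha>)\<^sup>2 + (sqrt \<tau> - 1 / sqrt \<tau>)\<^sup>2) powr (-1/4)"

definition A_plus_pair :: "real \<Rightarrow> (real \<Rightarrow> real) \<Rightarrow> (real \<Rightarrow> real) \<Rightarrow> real" where
  "A_plus_pair \<theta> p q =
     (LINT z : {0<..} \<times> {0<..} | lborel.
        (frakK 0 (snd z / fst z) + frakK \<theta> (snd z / fst z)) * p (fst z) * q (snd z)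
          * (fst z * snd z) powr (-1/4))"

definition A_minus_pair :: "real \<Rightarrow> (real \<Rightarrow> real) \<Rightarrow> (real \<Rightarrow> real) \<Rightarrow> real" where
  "A_minus_pair \<theta> p q =
     (LINT z : {0<..} \<times> {0<..} | lborel.
        (frakK 0 (snd z / fst z) - frakK \<theta> (snd z / fst z)) * p (fst z) * q (snd z)
          * (fst z * snd z) powr (-1/4))"

end

theory Submission
  imports Defs
begin


lemma C_inf_continuous: "C_inf f \<Longrightarrow> continuous_on UNIV f"
  by (erule C_inf.cases) (auto intro!: continuous_at_imp_continuous_on differentiable_imp_continuous_within)

lemma C_inf_measurable: "C_inf f \<Longrightarrow> f \<in> borel_measurable borel"
  using C_inf_continuous borel_measurable_continuous_onI by blast

lemma K0_id:
  fixes x y :: real assumes "0 < x" "0 < y"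
  shows "(x * y) powr (-1/4) * frakK 0 (y / x) = \<bar>x - y\<bar> powr (-1/2)"
proof -
  have s: "(sqrt (y/x) - 1 / sqrt (y/x))\<^sup>2 = (x - y)\<^sup>2 / (x * y)"
    using assms by (simp add: real_sqrt_divide field_simps power2_eq_square)
  have "frakK 0 (y/x) = ((x - y)\<^sup>2 / (x * y)) powr (-1/4)"
    unfolding frakK_def s by simp
  also have "\<dots> = ((x - y)\<^sup>2) powr (-1/4) / (x*y) powr (-1/4)"
    using assms by (simp add: powr_divide)
  also have "((x - y)\<^sup>2) powr (-1/4) = \<bar>x - y\<bar> powr (-1/2)"
  proof -
    have "((x - y)\<^sup>2) = \<bar>x - y\<bar> powr 2"
      by (cases "x = y") (simp_all add: powr_numeral)
    then have "((x - y)\<^sup>2) powr (-1/4) = \<bar>x - y\<bar> powr (2 * (-1/4))"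
      by (simp only: powr_powr)
    then show ?thesis by simp
  qed
  finally show ?thesis using assms by simp
qed

lemma Kth_id:
  fixes x y :: real assumes "0 < x" "0 < y"
  shows "(x * y) powr (-1/4) * frakK th (y / x) = (x\<^sup>2 + y\<^sup>2 - 2 * x * y * cos (2 * th)) powr (-1/4)"
proof -
  have c: "cos (2*th) = 1 - 2 * (sin th)\<^sup>2" by (rule cos_double_sin)
  have s: "4 * (sin th)\<^sup>2 + (sqrt (y/x) - 1 / sqrt (y/x))\<^sup>2 = (x\<^sup>2 + y\<^sup>2 - 2 * x * y * cos (2 * th)) / (x * y)"
    unfolding c using assms by (simp add: real_sqrt_divide field_simps power2_eq_square)
  have nn: "0 \<le> x\<^sup>2 + y\<^sup>2 - 2 * x * y * cos (2 * th)"
  proof -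
    have "x * y * cos (2*th) \<le> x * y" using assms by (simp add: mult_left_le)
    then have "(x - y)\<^sup>2 \<le> x\<^sup>2 + y\<^sup>2 - 2 * x * y * cos (2 * th)" by (simp add: power2_diff)
    then show ?thesis by (smt (verit) zero_le_power2)
  qed
  have "frakK th (y/x) = ((x\<^sup>2 + y\<^sup>2 - 2 * x * y * cos (2 * th)) / (x * y)) powr (-1/4)"
    unfolding frakK_def s by simp
  also have "\<dots> = (x\<^sup>2 + y\<^sup>2 - 2 * x * y * cos (2 * th)) powr (-1/4) / (x*y) powr (-1/4)"
    using assms nn by (simp add: powr_divide)
  finally show ?thesis using assms by simp
qed

lemma Kth_bound:
  fixes t :: real assumes "sin th \<noteq> 0"
  shows "frakK th t \<le> (4 * (sin th)\<^sup>2) powr (-1/4)"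
  unfolding frakK_def using assms by (intro powr_mono2') auto



lemma I1:
  fixes L :: real assumes L: "0 \<le> L"
  shows "(\<integral>\<^sup>+y. ennreal (indicator {-L..L} y * \<bar>y\<bar> powr (-1/2)) \<partial>lborel) < \<infinity>"
proof -
  define f where "f y = ennreal (y powr (-1/2)) * indicator {0..L} y" for y :: real
  have fm[measurable]: "f \<in> borel_measurable borel" unfolding f_def by measurable
  have I: "integral\<^sup>N lborel f = ennreal (L powr (-1/2 + 1) / (-1/2 + 1))"
    unfolding f_def
    by (rule nn_integral_has_integral_lebesgue') (use has_integral_powr_from_0[of "-1/2" L] L in auto)
  have R: "integral\<^sup>N lborel f = (\<integral>\<^sup>+y. f (- y) \<partial>lborel)"
    using nn_integral_real_affine[OF fm, of "-1" 0] by simp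
  have "(\<integral>\<^sup>+y. ennreal (indicator {-L..L} y * \<bar>y\<bar> powr (-1/2)) \<partial>lborel)
      \<le> (\<integral>\<^sup>+y. f y + f (- y) \<partial>lborel)"
    by (intro nn_integral_mono) (auto simp: f_def indicator_def)
  also have "\<dots> = integral\<^sup>N lborel f + (\<integral>\<^sup>+y. f (- y) \<partial>lborel)"
    by (intro nn_integral_add) auto
  also have "\<dots> < \<infinity>" using I R[symmetric] by (simp add: ennreal_plus[symmetric] del: ennreal_plus)
  finally show ?thesis .
qed

lemma I2:
  fixes a b :: real assumes ab: "a \<le> b"
  shows "integrable (lborel \<Otimes>\<^sub>M lborel)
    (\<lambda>z. indicator ({a..b}\<times>{a..b}) z * \<bar>fst z - snd z\<bar> powr (-1/2))"
proof (subst integrable_iff_bounded, intro conjI)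
  show "(\<lambda>z. indicator ({a..b}\<times>{a..b}) z * \<bar>fst z - snd z\<bar> powr (-1/2)) \<in> borel_measurable (lborel \<Otimes>\<^sub>M lborel)"
    by measurable
  define L where "L = b - a"
  have L: "0 \<le> L" using ab by (simp add: L_def)
  define g where "g y = ennreal (indicator {-L..L} y * \<bar>y\<bar> powr (-1/2))" for y :: real
  have gm[measurable]: "g \<in> borel_measurable borel" unfolding g_def by measurable
  define C where "C = integral\<^sup>N lborel g"
  have C: "C < \<infinity>" unfolding C_def g_def using I1[OF L] .
  have inner: "(\<integral>\<^sup>+y. ennreal (norm (indicator ({a..b}\<times>{a..b}) (x, y) * \<bar>fst (x,y) - snd (x,y)\<bar> powr (-1/2))) \<partial>lborel)
      \<le> indicator {a..b} x * C" for x
  proof -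
    have "(\<integral>\<^sup>+y. ennreal (norm (indicator ({a..b}\<times>{a..b}) (x, y) * \<bar>fst (x,y) - snd (x,y)\<bar> powr (-1/2))) \<partial>lborel)
      \<le> (\<integral>\<^sup>+y. indicator {a..b} x * g (y - x) \<partial>lborel)"
      by (intro nn_integral_mono) (auto simp: g_def indicator_def L_def abs_minus_commute)
    also have "\<dots> = indicator {a..b} x * (\<integral>\<^sup>+y. g (y - x) \<partial>lborel)"
      by (intro nn_integral_cmult) measurable
    also have "(\<integral>\<^sup>+y. g (y - x) \<partial>lborel) = C"
      unfolding C_def using nn_integral_real_affine[of "\<lambda>y. g (y - x)" 1 x] by simp
    finally show ?thesis .
  qed
  have "(\<integral>\<^sup>+z. ennreal (norm (indicator ({a..b}\<times>{a..b}) z * \<bar>fst z - snd z\<bar> powr (-1/2))) \<partial>(lborel \<Otimes>\<^sub>M lborel))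
    = (\<integral>\<^sup>+x. \<integral>\<^sup>+y. ennreal (norm (indicator ({a..b}\<times>{a..b}) (x, y) * \<bar>fst (x,y) - snd (x,y)\<bar> powr (-1/2))) \<partial>lborel \<partial>lborel)"
    by (rule lborel.nn_integral_fst[symmetric]) measurable
  also have "\<dots> \<le> (\<integral>\<^sup>+x. indicator {a..b} x * C \<partial>lborel)"
    by (intro nn_integral_mono inner)
  also have "\<dots> = C * emeasure lborel {a..b}"
    by (subst nn_integral_cmult_indicator[symmetric]) (auto simp: mult.commute)
  also have "\<dots> < \<infinity>" using C ab by (simp add: ennreal_mult_less_top)
  finally show "(\<integral>\<^sup>+z. ennreal (norm (indicator ({a..b}\<times>{a..b}) z * \<bar>fst z - snd z\<bar> powr (-1/2))) \<partial>(lborel \<Otimes>\<^sub>M lborel)) < \<infinity>" .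
qed



lemma frakK_nonneg: "0 \<le> frakK th t" unfolding frakK_def by simp

lemma frakK_measurable[measurable]:
  "(\<lambda>z::real\<times>real. frakK th (f z)) \<in> borel_measurable M" if [measurable]: "f \<in> borel_measurable M"
  unfolding frakK_def by measurable

lemma integrable_box:
  fixes a b :: real
  shows "integrable (lborel \<Otimes>\<^sub>M lborel) (indicator ({a..b}\<times>{a..b}) :: _ \<Rightarrow> real)"
  by (intro integrable_real_indicator) (auto simp: lborel.emeasure_pair_measure_Times ennreal_mult_less_top emeasure_lborel_Icc_eq)

lemma integrable_K:
  fixes th a b B :: real and w :: "real \<times> real \<Rightarrow> real"
  assumes th: "th = 0 \<or> sin th \<noteq> 0" and ab: "0 < a" "a \<le> b"
    and wm[measurable]: "w \<in> borel_measurable (lborel \<Otimes>\<^sub>M lborel)"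
    and wB: "\<And>z. \<bar>w z\<bar> \<le> B" and wsupp: "\<And>z. w z \<noteq> 0 \<Longrightarrow> z \<in> {a..b}\<times>{a..b}"
  shows "integrable (lborel \<Otimes>\<^sub>M lborel)
    (\<lambda>z. indicator ({0<..}\<times>{0<..}) z * w z * ((fst z * snd z) powr (-1/4) * frakK th (snd z / fst z)))"
proof -
  have B0: "0 \<le> B" using wB[of undefined] by linarith
  have meas: "(\<lambda>z. indicator ({0<..}\<times>{0<..}) z * w z * ((fst z * snd z) powr (-1/4) * frakK th (snd z / fst z)))
     \<in> borel_measurable (lborel \<Otimes>\<^sub>M lborel)" by measurable
  show ?thesis
  proof (cases "th = 0")
    case True
    show ?thesis
    proof (rule Bochner_Integration.integrable_bound[OF integrable_mult_right[OF I2[OF ab(2)], of B] meas], intro AE_I2)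
      fix z :: "real \<times> real"
      obtain x y where z: "z = (x, y)" by (cases z)
      show "norm (indicator ({0<..}\<times>{0<..}) z * w z * ((fst z * snd z) powr (-1/4) * frakK th (snd z / fst z)))
        \<le> norm (B * (indicator ({a..b}\<times>{a..b}) z * \<bar>fst z - snd z\<bar> powr (-1/2)))"
      proof (cases "w z = 0 \<or> \<not> (0 < x \<and> 0 < y)")
        case True then show ?thesis by (auto simp: z indicator_def)
      next
        case False
        then have xy: "0 < x" "0 < y" "z \<in> {a..b}\<times>{a..b}" using wsupp by auto
        have "norm (indicator ({0<..}\<times>{0<..}) z * w z * ((fst z * snd z) powr (-1/4) * frakK th (snd z / fst z)))
          = \<bar>w z\<bar> * \<bar>x - y\<bar> powr (-1/2)"
          using xy K0_id[of x y] True by (simp add: z abs_mult)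
        also have "\<dots> \<le> B * \<bar>x - y\<bar> powr (-1/2)" by (intro mult_right_mono wB) simp
        also have "\<dots> = norm (B * (indicator ({a..b}\<times>{a..b}) z * \<bar>fst z - snd z\<bar> powr (-1/2)))"
          using xy B0 by (simp add: z)
        finally show ?thesis .
      qed
    qed
  next
    case False
    then have s: "sin th \<noteq> 0" using th by simp
    define M where "M = B * ((a * a) powr (-1/4) * (4 * (sin th)\<^sup>2) powr (-1/4))"
    have M0: "0 \<le> M" unfolding M_def using B0 by simp
    show ?thesis
    proof (rule Bochner_Integration.integrable_bound[OF integrable_mult_right[OF integrable_box, of M a b] meas], intro AE_I2)
      fix z :: "real \<times> real"
      obtain x y where z: "z = (x, y)" by (cases z)
      show "norm (indicator ({0<..}\<times>{0<..}) z * w z * ((fst z * snd z) powr (-1/4) * frakK th (snd z / fst z)))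
        \<le> norm (M * indicator ({a..b}\<times>{a..b}) z)"
      proof (cases "w z = 0 \<or> \<not> (0 < x \<and> 0 < y)")
        case True then show ?thesis using M0 by (auto simp: z indicator_def)
      next
        case False
        then have xy: "0 < x" "0 < y" "z \<in> {a..b}\<times>{a..b}" using wsupp by auto
        have p1: "(x * y) powr (-1/4) \<le> (a * a) powr (-1/4)"
          using xy ab by (intro powr_mono2') (auto simp: z intro: mult_mono)
        have "norm (indicator ({0<..}\<times>{0<..}) z * w z * ((fst z * snd z) powr (-1/4) * frakK th (snd z / fst z)))
          = \<bar>w z\<bar> * ((x * y) powr (-1/4) * frakK th (y / x))"
          using xy frakK_nonneg[of th "y/x"] by (simp add: z abs_mult)
        also have "\<dots> \<le> B * ((a * a) powr (-1/4) * (4 * (sin th)\<^sup>2) powr (-1/4))"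
          by (intro mult_mono wB p1 Kth_bound s) (auto simp: frakK_nonneg B0)
        also have "\<dots> = norm (M * indicator ({a..b}\<times>{a..b}) z)"
          using xy M0 by (simp add: M_def)
        finally show ?thesis .
      qed
    qed
  qed
qed



lemma refl_distr1:
  assumes "a \<in> {-1, 1::real}"
  shows "distr lborel lborel (\<lambda>x::real. a * x) = lborel"
proof (cases "a = 1")
  case True then show ?thesis using distr_id[of lborel] by simp
next
  case False
  then have a: "a = -1" using assms by auto
  have "distr lborel lborel (\<lambda>x::real. a * x) = distr lborel borel uminus"
    by (rule distr_cong) (auto simp: a)
  then show ?thesis using lborel_distr_uminus by simp
qed

lemma refl_distr:
  assumes "a \<in> {-1, 1::real}" "b \<in> {-1, 1::real}"
  shows "distr (lborel \<Otimes>\<^sub>M lborel) (lborel \<Otimes>\<^sub>M lborel) (\<lambda>(x,y). (a * x, b * y)) = (lborel \<Otimes>\<^sub>M lborel :: (real\<times>real) measure)"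
proof -
  have "distr lborel lborel (\<lambda>x::real. a * x) \<Otimes>\<^sub>M distr lborel lborel (\<lambda>x::real. b * x)
      = distr (lborel \<Otimes>\<^sub>M lborel) (lborel \<Otimes>\<^sub>M lborel) (\<lambda>(x,y). (a * x, b * y))"
    by (rule pair_measure_distr) (auto simp: refl_distr1[OF assms(2)] lborel.sigma_finite_measure_axioms)
  then show ?thesis using refl_distr1[OF assms(1)] refl_distr1[OF assms(2)] by simp
qed

lemma refl_integral:
  fixes f :: "real \<times> real \<Rightarrow> real"
  assumes "a \<in> {-1, 1::real}" "b \<in> {-1, 1::real}" and [measurable]: "f \<in> borel_measurable (lborel \<Otimes>\<^sub>M lborel)"
  shows "(\<integral>z. f (a * fst z, b * snd z) \<partial>(lborel \<Otimes>\<^sub>M lborel)) = integral\<^sup>L (lborel \<Otimes>\<^sub>M lborel) f"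
proof -
  have "integral\<^sup>L (lborel \<Otimes>\<^sub>M lborel) f = integral\<^sup>L (distr (lborel \<Otimes>\<^sub>M lborel) (lborel \<Otimes>\<^sub>M lborel) (\<lambda>(x,y). (a * x, b * y))) f"
    using refl_distr[OF assms(1,2)] by simp
  also have "\<dots> = (\<integral>z. f ((\<lambda>(x,y). (a * x, b * y)) z) \<partial>(lborel \<Otimes>\<^sub>M lborel))"
    by (rule integral_distr) measurable
  finally show ?thesis by (simp add: case_prod_beta)
qed

lemma refl_integrable:
  fixes f :: "real \<times> real \<Rightarrow> real"
  assumes "a \<in> {-1, 1::real}" "b \<in> {-1, 1::real}" and "integrable (lborel \<Otimes>\<^sub>M lborel) f"
  shows "integrable (lborel \<Otimes>\<^sub>M lborel) (\<lambda>z. f (a * fst z, b * snd z))"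
proof -
  have "integrable (distr (lborel \<Otimes>\<^sub>M lborel) (lborel \<Otimes>\<^sub>M lborel) (\<lambda>(x,y). (a * x, b * y))) f"
    using refl_distr[OF assms(1,2)] assms(3) by simp
  then have "integrable (lborel \<Otimes>\<^sub>M lborel) (\<lambda>z. f ((\<lambda>(x,y). (a * x, b * y)) z))"
    by (rule integrable_distr[rotated]) measurable
  then show ?thesis by (simp add: case_prod_beta)
qed

lemma ep_ne_em:
  fixes ep em :: "real^2"
  assumes "norm ep = 1" "ep \<bullet> em = cos (2 * th)" "0 < 2 * th" "2 * th < 2 * pi"
  shows "ep \<noteq> em"
proof
  assume "ep = em"
  then have "cos (2 * th) = 1" using assms by (metis inner_commute norm_eq_1 inner_real_def)
  then obtain n :: int where n: "2 * th = real_of_int n * 2 * pi" using cos_one_2pi_int by metis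
  have "0 < real_of_int n * (2 * pi)" "real_of_int n * (2 * pi) < 1 * (2 * pi)" using assms(3,4) n by auto
  then have "0 < real_of_int n" "real_of_int n < 1"
    by (simp_all add: zero_less_mult_iff)
  then show False by simp
qed



definition phi :: "real^2 \<Rightarrow> real^2 \<Rightarrow> real^2 \<Rightarrow> real \<Rightarrow> real^2" where
  "phi c ep em t = (if 0 \<le> t then c + t *\<^sub>R ep else c + (-t) *\<^sub>R em)"

lemma phi_meas[measurable]: "phi c ep em \<in> borel_measurable borel"
  unfolding phi_def by measurable

lemma norm_phi: "norm ep = 1 \<Longrightarrow> norm em = 1 \<Longrightarrow> norm (phi c ep em t - c) = \<bar>t\<bar>"
  by (simp add: phi_def)

lemma norm_phi': "norm ep = 1 \<Longrightarrow> norm em = 1 \<Longrightarrow> norm (c - phi c ep em t) = \<bar>t\<bar>"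
  using norm_phi by (metis norm_minus_commute)

lemma ray_emeasure:
  assumes A: "A \<in> sets borel"
  shows "emeasure (ray_measure c e) A = emeasure lborel ((\<lambda>t. c + t *\<^sub>R e) -` A \<inter> {0..})"
proof -
  have m: "(\<lambda>t::real. c + t *\<^sub>R e) \<in> measurable (restrict_space lborel {0..}) borel"
    by (intro measurable_restrict_space1) measurable
  have "emeasure (ray_measure c e) A = emeasure (restrict_space lborel {0..}) ((\<lambda>t. c + t *\<^sub>R e) -` A \<inter> {0..})"
    unfolding ray_measure_def using emeasure_distr[OF m A] by simp
  also have "\<dots> = emeasure lborel ((\<lambda>t. c + t *\<^sub>R e) -` A \<inter> {0..})"
    by (rule emeasure_restrict_space) (use A in auto)
  finally show ?thesis .
qed

lemma Gamma_eq:
  assumes "norm ep = 1" "norm em = 1"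
  shows "Gamma_measure c ep em = distr lborel borel (phi c ep em)"
proof -
  have "distr lborel borel (phi c ep em) = measure_of UNIV (sets borel) (emeasure (distr lborel borel (phi c ep em)))"
    using measure_of_of_measure[of "distr lborel borel (phi c ep em)"] by simp
  also have "\<dots> = Gamma_measure c ep em"
    unfolding Gamma_measure_def
  proof (rule measure_of_eq)
    fix A :: "(real^2) set" assume "A \<in> sigma_sets UNIV (sets borel)"
    then have A[measurable]: "A \<in> sets borel" by (metis sets.sigma_sets_eq space_borel)
    define f1 where "f1 = (\<lambda>t::real. c + t *\<^sub>R ep)"
    define f2 where "f2 = (\<lambda>t::real. c + t *\<^sub>R em)"
    have [measurable]: "f1 \<in> borel_measurable borel" "f2 \<in> borel_measurable borel"
      unfolding f1_def f2_def by measurable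
    have "emeasure (distr lborel borel (phi c ep em)) A = emeasure lborel (phi c ep em -` A)"
      by (subst emeasure_distr) auto
    also have "phi c ep em -` A = (f1 -` A \<inter> {0..}) \<union> ((\<lambda>t. f2 (-t)) -` A \<inter> {..<0})"
      by (auto simp: phi_def f1_def f2_def split: if_splits)
    also have "emeasure lborel \<dots> = emeasure lborel (f1 -` A \<inter> {0..}) + emeasure lborel ((\<lambda>t. f2 (-t)) -` A \<inter> {..<0})"
      by (rule plus_emeasure[symmetric]) auto
    also have "emeasure lborel ((\<lambda>t. f2 (-t)) -` A \<inter> {..<0}) = emeasure lborel (f2 -` A \<inter> {0<..})"
    proof -
      have "emeasure lborel (f2 -` A \<inter> {0<..}) = emeasure (distr lborel borel uminus) (f2 -` A \<inter> {0<..})"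
        using lborel_distr_uminus by simp
      also have "\<dots> = emeasure lborel (uminus -` (f2 -` A \<inter> {0<..}))"
        by (subst emeasure_distr) auto
      also have "uminus -` (f2 -` A \<inter> {0<..}) = (\<lambda>t. f2 (-t)) -` A \<inter> {..<0}" by auto
      finally show ?thesis by simp
    qed
    also have "emeasure lborel (f2 -` A \<inter> {0<..}) = emeasure lborel (f2 -` A \<inter> {0..})"
    proof -
      have "f2 -` A \<inter> {0..} = (f2 -` A \<inter> {0<..}) \<union> (f2 -` A \<inter> {0})" by auto
      moreover have "f2 -` A \<inter> {0} \<in> null_sets lborel"
        by (rule null_sets_subset[of "{0}"]) auto
      ultimately show ?thesis by (simp add: emeasure_Un_null_set)
    qed
    finally show "emeasure (distr lborel borel (phi c ep em)) A = emeasure (ray_measure c ep) A + emeasure (ray_measure c em) A"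
      using ray_emeasure[OF A, of c ep] ray_emeasure[OF A, of c em] by (simp add: f1_def f2_def)
  qed auto
  finally show ?thesis by simp
qed

lemma Gamma_sigma_finite:
  assumes "norm ep = 1" "norm em = 1"
  shows "sigma_finite_measure (distr lborel borel (phi c ep em))"
proof
  show "\<exists>A. countable A \<and> A \<subseteq> sets (distr lborel borel (phi c ep em)) \<and> \<Union> A = space (distr lborel borel (phi c ep em)) \<and>
       (\<forall>a\<in>A. emeasure (distr lborel borel (phi c ep em)) a \<noteq> \<infinity>)"
  proof (intro exI[of _ "range (\<lambda>n::nat. cball c (real n))"] conjI ballI)
    show "\<Union> (range (\<lambda>n::nat. cball c (real n))) = space (distr lborel borel (phi c ep em))"
      by (auto simp: real_arch_simple dist_commute mem_cball)
  next
    fix a assume "a \<in> range (\<lambda>n::nat. cball c (real n))"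
    then obtain n :: nat where a: "a = cball c (real n)" by auto
    have "emeasure (distr lborel borel (phi c ep em)) a = emeasure lborel (phi c ep em -` a)"
      unfolding a by (subst emeasure_distr) auto
    also have "\<dots> \<le> emeasure lborel {- real n .. real n}"
      by (intro emeasure_mono) (auto simp: a mem_cball dist_norm norm_phi'[OF assms])
    finally show "emeasure (distr lborel borel (phi c ep em)) a \<noteq> \<infinity>"
      by (auto simp: top_unique)
  qed auto
qed



lemma Theta_meas[measurable]:
  assumes [measurable]: "p \<in> borel_measurable borel" "pt \<in> borel_measurable borel"
  shows "Theta_Gamma c ep em p pt \<in> borel_measurable borel"
  unfolding Theta_Gamma_def by measurable

lemma cont_supp_bound:
  fixes f :: "real \<Rightarrow> real"
  assumes "continuous_on UNIV f" "\<And>t. f t \<noteq> 0 \<Longrightarrow> t \<in> {a..b}"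
  shows "\<exists>B. \<forall>t. \<bar>f t\<bar> \<le> B"
proof -
  have "compact (f ` {a..b})"
    by (rule compact_continuous_image) (use assms(1) continuous_on_subset in auto)
  then obtain B where B: "\<And>y. y \<in> f ` {a..b} \<Longrightarrow> norm y \<le> B"
    using compact_imp_bounded bounded_iff by metis
  show ?thesis
  proof (intro exI[of _ "max B 0"] allI)
    fix t show "\<bar>f t\<bar> \<le> max B 0"
      using B[of "f t"] assms(2)[of t] by (cases "f t = 0") auto
  qed
qed

lemma cross_norm:
  fixes ep em :: "real^2"
  assumes "norm ep = 1" "norm em = 1"
  shows "norm (s *\<^sub>R ep - t *\<^sub>R em) powr (-1/2) = (s\<^sup>2 + t\<^sup>2 - 2 * s * t * (ep \<bullet> em)) powr (-1/4)"
proof -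
  have e: "ep \<bullet> ep = 1" "em \<bullet> em = 1" using assms by (simp_all add: norm_eq_1)
  have "(norm (s *\<^sub>R ep - t *\<^sub>R em))\<^sup>2 = s\<^sup>2 + t\<^sup>2 - 2 * s * t * (ep \<bullet> em)"
    unfolding power2_norm_eq_inner
    by (simp add: inner_diff_left inner_diff_right e inner_commute[of em ep] power2_eq_square algebra_simps)
  moreover have "((norm (s *\<^sub>R ep - t *\<^sub>R em))\<^sup>2) powr (-1/4) = norm (s *\<^sub>R ep - t *\<^sub>R em) powr (-1/2)"
  proof -
    have "(norm (s *\<^sub>R ep - t *\<^sub>R em))\<^sup>2 = norm (s *\<^sub>R ep - t *\<^sub>R em) powr 2"
      by (cases "s *\<^sub>R ep - t *\<^sub>R em = 0") (simp_all add: powr_numeral)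
    then have "((norm (s *\<^sub>R ep - t *\<^sub>R em))\<^sup>2) powr (-1/4) = norm (s *\<^sub>R ep - t *\<^sub>R em) powr (2 * (-1/4))"
      by (simp only: powr_powr)
    then show ?thesis by simp
  qed
  ultimately show ?thesis by simp
qed

lemma Theta_phi:
  fixes ep em :: "real^2"
  assumes "norm ep = 1" "norm em = 1" "ep \<noteq> em"
  shows "Theta_Gamma c ep em p pt (phi c ep em s) =
    (if 0 < s then (p s + pt s) / sqrt 2 else if s < 0 then (p (-s) - pt (-s)) / sqrt 2 else 0)"
proof -
  consider "0 < s" | "s < 0" | "s = 0" by linarith
  then show ?thesis
  proof cases
    case 1
    then show ?thesis using assms by (auto simp: Theta_Gamma_def phi_def)
  next
    case 2
    have ne: "c + (- s) *\<^sub>R em \<noteq> c + (- s) *\<^sub>R ep" using 2 assms(3) by auto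
    show ?thesis using 2 assms ne by (auto simp: Theta_Gamma_def phi_def)
  next
    case 3
    then show ?thesis by (simp add: Theta_Gamma_def phi_def)
  qed
qed



lemma integrable_K2:
  fixes f g :: "real \<Rightarrow> real" and th a b :: real
  assumes th: "th = 0 \<or> sin th \<noteq> 0" and ab: "0 < a" "a \<le> b"
    and fm[measurable]: "f \<in> borel_measurable borel" and gm[measurable]: "g \<in> borel_measurable borel"
    and fB: "\<And>t. \<bar>f t\<bar> \<le> B1" and gB: "\<And>t. \<bar>g t\<bar> \<le> B2"
    and fs: "\<And>t. f t \<noteq> 0 \<Longrightarrow> t \<in> {a..b}" and gs: "\<And>t. g t \<noteq> 0 \<Longrightarrow> t \<in> {a..b}"
  shows "integrable (lborel \<Otimes>\<^sub>M lborel)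
    (\<lambda>z. indicator ({0<..}\<times>{0<..}) z * (f (fst z) * g (snd z)) * ((fst z * snd z) powr (-1/4) * frakK th (snd z / fst z)))"
proof (rule integrable_K[OF th ab])
  show "(\<lambda>z. f (fst z) * g (snd z)) \<in> borel_measurable (lborel \<Otimes>\<^sub>M lborel)" by measurable
  fix z :: "real \<times> real"
  have "0 \<le> B1" using fB[of 0] by linarith
  then show "\<bar>f (fst z) * g (snd z)\<bar> \<le> B1 * B2"
    unfolding abs_mult by (intro mult_mono fB gB) auto
  show "f (fst z) * g (snd z) \<noteq> 0 \<Longrightarrow> z \<in> {a..b} \<times> {a..b}"
    using fs gs by (cases z) auto
qed



lemma main_identity:
  fixes c ep em :: "real^2" and th a b :: real and rho p pt q qt :: "real \<Rightarrow> real"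
  assumes geo: "norm ep = 1" "norm em = 1" "ep \<bullet> em = cos (2*th)" "0 < 2*th" "2*th < 2*pi"
    and cont: "continuous_on UNIV rho" "continuous_on UNIV p" "continuous_on UNIV pt"
      "continuous_on UNIV q" "continuous_on UNIV qt"
    and supp: "\<And>t. p t \<noteq> 0 \<Longrightarrow> t \<in> {a..b}" "\<And>t. pt t \<noteq> 0 \<Longrightarrow> t \<in> {a..b}"
      "\<And>t. q t \<noteq> 0 \<Longrightarrow> t \<in> {a..b}" "\<And>t. qt t \<noteq> 0 \<Longrightarrow> t \<in> {a..b}"
    and ab: "0 < a" "a \<le> b"
  shows "A_Gamma_pair c ep em (\<lambda>x. rho (norm (x - c)) * Theta_Gamma c ep em p pt x)
                               (\<lambda>x. rho (norm (x - c)) * Theta_Gamma c ep em q qt x)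
     = A_plus_pair th (\<lambda>t. rho t * p t) (\<lambda>t. rho t * q t)
       + A_minus_pair th (\<lambda>t. rho t * pt t) (\<lambda>t. rho t * qt t)"
proof -
  note [measurable] = borel_measurable_continuous_onI[OF cont(1)] borel_measurable_continuous_onI[OF cont(2)]
    borel_measurable_continuous_onI[OF cont(3)] borel_measurable_continuous_onI[OF cont(4)]
    borel_measurable_continuous_onI[OF cont(5)]
  have ne: "ep \<noteq> em" using ep_ne_em[OF geo(1,3,4,5)] .
  have sn: "sin th \<noteq> 0" using geo(4,5) sin_gt_zero[of th] by auto
  define u where "u x = rho (norm (x - c)) * Theta_Gamma c ep em p pt x" for x
  define v where "v x = rho (norm (x - c)) * Theta_Gamma c ep em q qt x" for x
  define \<phi> where "\<phi> = phi c ep em"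
  define F where "F z = u (snd z) * v (fst z) * norm (fst z - snd z) powr (-1/2)" for z :: "(real^2) \<times> (real^2)"
  have [measurable]: "u \<in> borel_measurable borel" "v \<in> borel_measurable borel"
    unfolding u_def v_def by measurable
  have [measurable]: "\<phi> \<in> borel_measurable borel" unfolding \<phi>_def by measurable
  have Fm[measurable]: "F \<in> borel_measurable (borel \<Otimes>\<^sub>M borel)" unfolding F_def by measurable
  have LHS: "A_Gamma_pair c ep em (\<lambda>x. rho (norm (x - c)) * Theta_Gamma c ep em p pt x)
                               (\<lambda>x. rho (norm (x - c)) * Theta_Gamma c ep em q qt x)
     = integral\<^sup>L (Gamma_measure c ep em \<Otimes>\<^sub>M Gamma_measure c ep em) F"
    unfolding A_Gamma_pair_def F_def u_def v_def by simp
  have GG: "Gamma_measure c ep em \<Otimes>\<^sub>M Gamma_measure c ep em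
      = distr (lborel \<Otimes>\<^sub>M lborel) (borel \<Otimes>\<^sub>M borel) (\<lambda>(x,y). (\<phi> x, \<phi> y))"
    unfolding Gamma_eq[OF geo(1,2)] \<phi>_def
    by (rule pair_measure_distr) (auto intro: Gamma_sigma_finite[OF geo(1,2)])
  have S3: "integral\<^sup>L (Gamma_measure c ep em \<Otimes>\<^sub>M Gamma_measure c ep em) F
      = (\<integral>z. F (\<phi> (fst z), \<phi> (snd z)) \<partial>(lborel \<Otimes>\<^sub>M lborel))"
    unfolding GG by (subst integral_distr) (auto simp: case_prod_beta)
  define H where "H z = u (\<phi> (fst z)) * v (\<phi> (snd z)) * norm (\<phi> (snd z) - \<phi> (fst z)) powr (-1/2)"
    for z :: "real \<times> real"
  have Hm[measurable]: "H \<in> borel_measurable (lborel \<Otimes>\<^sub>M lborel)" unfolding H_def by measurable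
  have S4: "(\<integral>z. F (\<phi> (fst z), \<phi> (snd z)) \<partial>(lborel \<Otimes>\<^sub>M lborel)) = integral\<^sup>L (lborel \<Otimes>\<^sub>M lborel) H"
    using lborel_pair.integral_product_swap[OF Hm] by (simp add: H_def F_def split_beta')

  define Up where "Up s = rho s * (p s + pt s) / sqrt 2" for s
  define Um where "Um s = rho s * (p s - pt s) / sqrt 2" for s
  define Vp where "Vp s = rho s * (q s + qt s) / sqrt 2" for s
  define Vm where "Vm s = rho s * (q s - qt s) / sqrt 2" for s
  define K where "K \<alpha> z = (fst z * snd z) powr (-1/4) * frakK \<alpha> (snd z / fst z)" for \<alpha> and z :: "real \<times> real"
  define Q where "Q = ({0<..}\<times>{0<..} :: (real\<times>real) set)"
  define g1 where "g1 z = indicator Q z * (Up (fst z) * Vp (snd z)) * K 0 z" for z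
  define g2 where "g2 z = indicator Q z * (Um (fst z) * Vm (snd z)) * K 0 z" for z
  define g3 where "g3 z = indicator Q z * (Up (fst z) * Vm (snd z)) * K th z" for z
  define g4 where "g4 z = indicator Q z * (Um (fst z) * Vp (snd z)) * K th z" for z
  have uphi: "u (\<phi> s) = (if 0 < s then Up s else if s < 0 then Um (-s) else 0)" for s
    unfolding u_def \<phi>_def Theta_phi[OF geo(1,2) ne] norm_phi[OF geo(1,2)] Up_def Um_def by auto
  have vphi: "v (\<phi> s) = (if 0 < s then Vp s else if s < 0 then Vm (-s) else 0)" for s
    unfolding v_def \<phi>_def Theta_phi[OF geo(1,2) ne] norm_phi[OF geo(1,2)] Vp_def Vm_def by auto
  have K0: "K 0 (x, y) = \<bar>x - y\<bar> powr (-1/2)" if "0 < x" "0 < y" for x y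
    unfolding K_def using K0_id[OF that] by simp
  have n1: "norm (\<phi> y - \<phi> x) powr (-1/2) = K 0 (x, y)" if "0 < x" "0 < y" for x y
  proof -
    have "\<phi> y - \<phi> x = (y - x) *\<^sub>R ep" using that by (simp add: \<phi>_def phi_def algebra_simps)
    then show ?thesis using K0[OF that] geo(1) by (simp add: abs_minus_commute)
  qed
  have n2: "norm (\<phi> y - \<phi> x) powr (-1/2) = K 0 (-x, -y)" if "x < 0" "y < 0" for x y
  proof -
    have "\<phi> y - \<phi> x = (x - y) *\<^sub>R em" using that by (simp add: \<phi>_def phi_def algebra_simps)
    then show ?thesis using K0[of "-x" "-y"] that geo(2) by (simp add: abs_minus_commute)
  qed
  have n3: "norm (\<phi> y - \<phi> x) powr (-1/2) = K th (x, -y)" if "0 < x" "y < 0" for x y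
  proof -
    have "\<phi> y - \<phi> x = - (x *\<^sub>R ep - (-y) *\<^sub>R em)" using that by (simp add: \<phi>_def phi_def algebra_simps)
    then have "norm (\<phi> y - \<phi> x) powr (-1/2) = (x\<^sup>2 + (-y)\<^sup>2 - 2 * x * (-y) * cos (2*th)) powr (-1/4)"
      using cross_norm[OF geo(1,2), of x "-y"] geo(3) by (simp only: norm_minus_cancel)
    then show ?thesis using Kth_id[of x "-y" th] that by (simp add: K_def)
  qed
  have n4: "norm (\<phi> y - \<phi> x) powr (-1/2) = K th (-x, y)" if "x < 0" "0 < y" for x y
  proof -
    have "\<phi> y - \<phi> x = y *\<^sub>R ep - (-x) *\<^sub>R em" using that by (simp add: \<phi>_def phi_def algebra_simps)
    then have "norm (\<phi> y - \<phi> x) powr (-1/2) = (y\<^sup>2 + (-x)\<^sup>2 - 2 * y * (-x) * cos (2*th)) powr (-1/4)"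
      using cross_norm[OF geo(1,2), of y "-x"] geo(3) by simp
    also have "\<dots> = ((-x)\<^sup>2 + y\<^sup>2 - 2 * (-x) * y * cos (2*th)) powr (-1/4)" by (simp add: algebra_simps)
    finally show ?thesis using Kth_id[of "-x" y th] that by (simp add: K_def)
  qed
  have Hsum: "H z = g1 (1 * fst z, 1 * snd z) + g2 ((-1) * fst z, (-1) * snd z)
      + g3 (1 * fst z, (-1) * snd z) + g4 ((-1) * fst z, 1 * snd z)" for z
  proof -
    obtain x y where z: "z = (x, y)" by (cases z)
    consider "0 < x" "0 < y" | "x < 0" "y < 0" | "0 < x" "y < 0" | "x < 0" "0 < y" | "x = 0 \<or> y = 0"
      by linarith
    then show ?thesis
    proof cases
      case 1 then show ?thesis using n1[of x y] by (simp add: z H_def uphi vphi g1_def g2_def g3_def g4_def Q_def)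
    next
      case 2 then show ?thesis using n2[of x y] by (simp add: z H_def uphi vphi g1_def g2_def g3_def g4_def Q_def)
    next
      case 3 then show ?thesis using n3[of x y] by (simp add: z H_def uphi vphi g1_def g2_def g3_def g4_def Q_def)
    next
      case 4 then show ?thesis using n4[of x y] by (simp add: z H_def uphi vphi g1_def g2_def g3_def g4_def Q_def)
    next
      case 5 then show ?thesis by (auto simp: z H_def uphi vphi g1_def g2_def g3_def g4_def Q_def)
    qed
  qed

  have UpC: "continuous_on UNIV Up" "continuous_on UNIV Um" "continuous_on UNIV Vp" "continuous_on UNIV Vm"
    unfolding Up_def Um_def Vp_def Vm_def using cont by (auto intro!: continuous_intros)
  have UpS: "Up s \<noteq> 0 \<Longrightarrow> s \<in> {a..b}" "Um s \<noteq> 0 \<Longrightarrow> s \<in> {a..b}"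
    "Vp s \<noteq> 0 \<Longrightarrow> s \<in> {a..b}" "Vm s \<noteq> 0 \<Longrightarrow> s \<in> {a..b}" for s
    unfolding Up_def Um_def Vp_def Vm_def using supp[of s] by fastforce+
  obtain B1 where B1: "\<And>t. \<bar>Up t\<bar> \<le> B1" using cont_supp_bound[OF UpC(1) UpS(1)] by blast
  obtain B2 where B2: "\<And>t. \<bar>Um t\<bar> \<le> B2" using cont_supp_bound[OF UpC(2) UpS(2)] by blast
  obtain B3 where B3: "\<And>t. \<bar>Vp t\<bar> \<le> B3" using cont_supp_bound[OF UpC(3) UpS(3)] by blast
  obtain B4 where B4: "\<And>t. \<bar>Vm t\<bar> \<le> B4" using cont_supp_bound[OF UpC(4) UpS(4)] by blast
  have [measurable]: "Up \<in> borel_measurable borel" "Um \<in> borel_measurable borel"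
     "Vp \<in> borel_measurable borel" "Vm \<in> borel_measurable borel"
    unfolding Up_def Um_def Vp_def Vm_def by measurable
  have th0: "(0::real) = 0 \<or> sin 0 \<noteq> 0" "th = 0 \<or> sin th \<noteq> 0" using sn by auto
  have ig1: "integrable (lborel \<Otimes>\<^sub>M lborel) g1" unfolding g1_def K_def Q_def
    by (rule integrable_K2[OF th0(1) ab _ _ B1 B3 UpS(1) UpS(3)]) measurable
  have ig2: "integrable (lborel \<Otimes>\<^sub>M lborel) g2" unfolding g2_def K_def Q_def
    by (rule integrable_K2[OF th0(1) ab _ _ B2 B4 UpS(2) UpS(4)]) measurable
  have ig3: "integrable (lborel \<Otimes>\<^sub>M lborel) g3" unfolding g3_def K_def Q_def
    by (rule integrable_K2[OF th0(2) ab _ _ B1 B4 UpS(1) UpS(4)]) measurable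
  have ig4: "integrable (lborel \<Otimes>\<^sub>M lborel) g4" unfolding g4_def K_def Q_def
    by (rule integrable_K2[OF th0(2) ab _ _ B2 B3 UpS(2) UpS(3)]) measurable
  have gm[measurable]: "g1 \<in> borel_measurable (lborel \<Otimes>\<^sub>M lborel)" "g2 \<in> borel_measurable (lborel \<Otimes>\<^sub>M lborel)"
    "g3 \<in> borel_measurable (lborel \<Otimes>\<^sub>M lborel)" "g4 \<in> borel_measurable (lborel \<Otimes>\<^sub>M lborel)"
    using ig1 ig2 ig3 ig4 by auto
  have pm: "(1::real) \<in> {-1, 1}" "(-1::real) \<in> {-1, 1}" by auto
  note r1 = refl_integrable[OF pm(1) pm(1) ig1]
  note r2 = refl_integrable[OF pm(2) pm(2) ig2]
  note r3 = refl_integrable[OF pm(1) pm(2) ig3]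
  note r4 = refl_integrable[OF pm(2) pm(1) ig4]
  have S5: "integral\<^sup>L (lborel \<Otimes>\<^sub>M lborel) H =
     integral\<^sup>L (lborel \<Otimes>\<^sub>M lborel) g1 + integral\<^sup>L (lborel \<Otimes>\<^sub>M lborel) g2
     + integral\<^sup>L (lborel \<Otimes>\<^sub>M lborel) g3 + integral\<^sup>L (lborel \<Otimes>\<^sub>M lborel) g4"
  proof -
    have "integral\<^sup>L (lborel \<Otimes>\<^sub>M lborel) H = (\<integral>z. g1 (1 * fst z, 1 * snd z) + g2 ((-1) * fst z, (-1) * snd z)
      + g3 (1 * fst z, (-1) * snd z) + g4 ((-1) * fst z, 1 * snd z) \<partial>(lborel \<Otimes>\<^sub>M lborel))"
      by (intro Bochner_Integration.integral_cong refl Hsum)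
    also have "\<dots> = (\<integral>z. g1 (1 * fst z, 1 * snd z) \<partial>(lborel \<Otimes>\<^sub>M lborel))
       + (\<integral>z. g2 ((-1) * fst z, (-1) * snd z) \<partial>(lborel \<Otimes>\<^sub>M lborel))
       + (\<integral>z. g3 (1 * fst z, (-1) * snd z) \<partial>(lborel \<Otimes>\<^sub>M lborel))
       + (\<integral>z. g4 ((-1) * fst z, 1 * snd z) \<partial>(lborel \<Otimes>\<^sub>M lborel))"
      using r1 r2 r3 r4 by (simp add: Bochner_Integration.integral_add integrable_add)
    also have "\<dots> = integral\<^sup>L (lborel \<Otimes>\<^sub>M lborel) g1 + integral\<^sup>L (lborel \<Otimes>\<^sub>M lborel) g2
     + integral\<^sup>L (lborel \<Otimes>\<^sub>M lborel) g3 + integral\<^sup>L (lborel \<Otimes>\<^sub>M lborel) g4"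
      by (simp only: refl_integral[OF pm(1) pm(1) gm(1)] refl_integral[OF pm(2) pm(2) gm(2)]
          refl_integral[OF pm(1) pm(2) gm(3)] refl_integral[OF pm(2) pm(1) gm(4)])
    finally show ?thesis .
  qed

  define P1 where "P1 t = rho t * p t" for t
  define P2 where "P2 t = rho t * pt t" for t
  define Q1 where "Q1 t = rho t * q t" for t
  define Q2 where "Q2 t = rho t * qt t" for t
  define k1 where "k1 z = indicator Q z * (P1 (fst z) * Q1 (snd z)) * K 0 z" for z
  define k2 where "k2 z = indicator Q z * (P1 (fst z) * Q1 (snd z)) * K th z" for z
  define k3 where "k3 z = indicator Q z * (P2 (fst z) * Q2 (snd z)) * K 0 z" for z
  define k4 where "k4 z = indicator Q z * (P2 (fst z) * Q2 (snd z)) * K th z" for z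
  have PC: "continuous_on UNIV P1" "continuous_on UNIV P2" "continuous_on UNIV Q1" "continuous_on UNIV Q2"
    unfolding P1_def P2_def Q1_def Q2_def using cont by (auto intro!: continuous_intros)
  have PS: "P1 s \<noteq> 0 \<Longrightarrow> s \<in> {a..b}" "P2 s \<noteq> 0 \<Longrightarrow> s \<in> {a..b}"
    "Q1 s \<noteq> 0 \<Longrightarrow> s \<in> {a..b}" "Q2 s \<noteq> 0 \<Longrightarrow> s \<in> {a..b}" for s
    unfolding P1_def P2_def Q1_def Q2_def using supp[of s] by fastforce+
  obtain C1 where C1: "\<And>t. \<bar>P1 t\<bar> \<le> C1" using cont_supp_bound[OF PC(1) PS(1)] by blast
  obtain C2 where C2: "\<And>t. \<bar>P2 t\<bar> \<le> C2" using cont_supp_bound[OF PC(2) PS(2)] by blast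
  obtain C3 where C3: "\<And>t. \<bar>Q1 t\<bar> \<le> C3" using cont_supp_bound[OF PC(3) PS(3)] by blast
  obtain C4 where C4: "\<And>t. \<bar>Q2 t\<bar> \<le> C4" using cont_supp_bound[OF PC(4) PS(4)] by blast
  have [measurable]: "P1 \<in> borel_measurable borel" "P2 \<in> borel_measurable borel"
     "Q1 \<in> borel_measurable borel" "Q2 \<in> borel_measurable borel"
    unfolding P1_def P2_def Q1_def Q2_def by measurable
  have ik1: "integrable (lborel \<Otimes>\<^sub>M lborel) k1" unfolding k1_def K_def Q_def
    by (rule integrable_K2[OF th0(1) ab _ _ C1 C3 PS(1) PS(3)]) measurable
  have ik2: "integrable (lborel \<Otimes>\<^sub>M lborel) k2" unfolding k2_def K_def Q_def
    by (rule integrable_K2[OF th0(2) ab _ _ C1 C3 PS(1) PS(3)]) measurable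
  have ik3: "integrable (lborel \<Otimes>\<^sub>M lborel) k3" unfolding k3_def K_def Q_def
    by (rule integrable_K2[OF th0(1) ab _ _ C2 C4 PS(2) PS(4)]) measurable
  have ik4: "integrable (lborel \<Otimes>\<^sub>M lborel) k4" unfolding k4_def K_def Q_def
    by (rule integrable_K2[OF th0(2) ab _ _ C2 C4 PS(2) PS(4)]) measurable
  have AP: "A_plus_pair th (\<lambda>t. rho t * p t) (\<lambda>t. rho t * q t) = (\<integral>z. k1 z + k2 z \<partial>(lborel \<Otimes>\<^sub>M lborel))"
    unfolding A_plus_pair_def set_lebesgue_integral_def lborel_prod
    by (intro Bochner_Integration.integral_cong refl)
       (simp add: k1_def k2_def K_def Q_def P1_def Q1_def algebra_simps)
  have AM: "A_minus_pair th (\<lambda>t. rho t * pt t) (\<lambda>t. rho t * qt t) = (\<integral>z. k3 z - k4 z \<partial>(lborel \<Otimes>\<^sub>M lborel))"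
    unfolding A_minus_pair_def set_lebesgue_integral_def lborel_prod
    by (intro Bochner_Integration.integral_cong refl)
       (simp add: k3_def k4_def K_def Q_def P2_def Q2_def algebra_simps)
  have s2: "sqrt 2 * sqrt 2 = (2::real)" by simp
  have e1: "Up x * Vp y + Um x * Vm y = P1 x * Q1 y + P2 x * Q2 y" for x y
  proof -
    have "Up x * Vp y + Um x * Vm y = rho x * rho y * ((p x + pt x) * (q y + qt y) + (p x - pt x) * (q y - qt y)) / (sqrt 2 * sqrt 2)"
      by (simp add: Up_def Vp_def Um_def Vm_def field_simps)
    also have "\<dots> = P1 x * Q1 y + P2 x * Q2 y"
      unfolding s2 by (simp add: P1_def P2_def Q1_def Q2_def field_simps)
    finally show ?thesis .
  qed
  have e2: "Up x * Vm y + Um x * Vp y = P1 x * Q1 y - P2 x * Q2 y" for x y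
  proof -
    have "Up x * Vm y + Um x * Vp y = rho x * rho y * ((p x + pt x) * (q y - qt y) + (p x - pt x) * (q y + qt y)) / (sqrt 2 * sqrt 2)"
      by (simp add: Up_def Vp_def Um_def Vm_def field_simps)
    also have "\<dots> = P1 x * Q1 y - P2 x * Q2 y"
      unfolding s2 by (simp add: P1_def P2_def Q1_def Q2_def field_simps)
    finally show ?thesis .
  qed
  have E1: "integral\<^sup>L (lborel \<Otimes>\<^sub>M lborel) g1 + integral\<^sup>L (lborel \<Otimes>\<^sub>M lborel) g2
      = integral\<^sup>L (lborel \<Otimes>\<^sub>M lborel) k1 + integral\<^sup>L (lborel \<Otimes>\<^sub>M lborel) k3"
  proof -
    have "integral\<^sup>L (lborel \<Otimes>\<^sub>M lborel) g1 + integral\<^sup>L (lborel \<Otimes>\<^sub>M lborel) g2 = (\<integral>z. g1 z + g2 z \<partial>(lborel \<Otimes>\<^sub>M lborel))"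
      using ig1 ig2 by simp
    also have "\<dots> = (\<integral>z. k1 z + k3 z \<partial>(lborel \<Otimes>\<^sub>M lborel))"
    proof (intro Bochner_Integration.integral_cong refl)
      fix z
      have "g1 z + g2 z = indicator Q z * (Up (fst z) * Vp (snd z) + Um (fst z) * Vm (snd z)) * K 0 z"
        by (simp add: g1_def g2_def algebra_simps)
      also have "\<dots> = k1 z + k3 z" unfolding e1 by (simp add: k1_def k3_def algebra_simps)
      finally show "g1 z + g2 z = k1 z + k3 z" .
    qed
    also have "\<dots> = integral\<^sup>L (lborel \<Otimes>\<^sub>M lborel) k1 + integral\<^sup>L (lborel \<Otimes>\<^sub>M lborel) k3"
      using ik1 ik3 by simp
    finally show ?thesis .
  qed
  have E2: "integral\<^sup>L (lborel \<Otimes>\<^sub>M lborel) g3 + integral\<^sup>L (lborel \<Otimes>\<^sub>M lborel) g4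
      = integral\<^sup>L (lborel \<Otimes>\<^sub>M lborel) k2 - integral\<^sup>L (lborel \<Otimes>\<^sub>M lborel) k4"
  proof -
    have "integral\<^sup>L (lborel \<Otimes>\<^sub>M lborel) g3 + integral\<^sup>L (lborel \<Otimes>\<^sub>M lborel) g4 = (\<integral>z. g3 z + g4 z \<partial>(lborel \<Otimes>\<^sub>M lborel))"
      using ig3 ig4 by simp
    also have "\<dots> = (\<integral>z. k2 z - k4 z \<partial>(lborel \<Otimes>\<^sub>M lborel))"
    proof (intro Bochner_Integration.integral_cong refl)
      fix z
      have "g3 z + g4 z = indicator Q z * (Up (fst z) * Vm (snd z) + Um (fst z) * Vp (snd z)) * K th z"
        by (simp add: g3_def g4_def algebra_simps)
      also have "\<dots> = k2 z - k4 z" unfolding e2 by (simp add: k2_def k4_def algebra_simps)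
      finally show "g3 z + g4 z = k2 z - k4 z" .
    qed
    also have "\<dots> = integral\<^sup>L (lborel \<Otimes>\<^sub>M lborel) k2 - integral\<^sup>L (lborel \<Otimes>\<^sub>M lborel) k4"
      using ik2 ik4 by simp
    finally show ?thesis .
  qed
  have RHS: "A_plus_pair th (\<lambda>t. rho t * p t) (\<lambda>t. rho t * q t) + A_minus_pair th (\<lambda>t. rho t * pt t) (\<lambda>t. rho t * qt t)
     = integral\<^sup>L (lborel \<Otimes>\<^sub>M lborel) k1 + integral\<^sup>L (lborel \<Otimes>\<^sub>M lborel) k2
       + (integral\<^sup>L (lborel \<Otimes>\<^sub>M lborel) k3 - integral\<^sup>L (lborel \<Otimes>\<^sub>M lborel) k4)"
    unfolding AP AM using ik1 ik2 ik3 ik4 by simp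
  show ?thesis
    unfolding LHS S3 S4 S5 RHS using E1 E2 by linarith
qed



lemma C0_supp:
  assumes "C0_inf_Rplus p"
  obtains a b where "0 < a" "\<And>t. p t \<noteq> 0 \<Longrightarrow> a \<le> t \<and> t \<le> b"
  using assms unfolding C0_inf_Rplus_def by blast

theorem corollary1:
  fixes c :: "real^2" and chiD :: "real^2 \<Rightarrow> real"
  assumes "C_inf chiD"
    and "\<exists>\<rho>::real \<Rightarrow> real. C_inf \<rho> \<and> bounded {r. \<rho> r \<noteq> 0} \<and> (\<forall>x. chiD x = \<rho> (norm (x - c)))"
  shows "\<exists>chi. Cc_inf_Rplus chi \<and>
    (\<forall>ep em :: real^2. \<forall>\<theta>::real.
       norm ep = 1 \<longrightarrow> norm em = 1 \<longrightarrow> ep \<bullet> em = cos (2 * \<theta>) \<longrightarrow>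
       0 < 2 * \<theta> \<longrightarrow> 2 * \<theta> < 2 * pi \<longrightarrow>
       (\<forall>p pt q qt. C0_inf_Rplus p \<longrightarrow> C0_inf_Rplus pt \<longrightarrow> C0_inf_Rplus q \<longrightarrow> C0_inf_Rplus qt \<longrightarrow>
          A_Gamma_pair c ep em (\<lambda>x. chiD x * Theta_Gamma c ep em p pt x)
                               (\<lambda>x. chiD x * Theta_Gamma c ep em q qt x)
          = A_plus_pair \<theta> (\<lambda>t. chi t * p t) (\<lambda>t. chi t * q t)
            + A_minus_pair \<theta> (\<lambda>t. chi t * pt t) (\<lambda>t. chi t * qt t)))"
proof -
  obtain rho :: "real \<Rightarrow> real" where rho: "C_inf rho" "bounded {r. rho r \<noteq> 0}" "\<And>x. chiD x = rho (norm (x - c))"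
    using assms(2) by blast
  have chiD_eq: "chiD = (\<lambda>x. rho (norm (x - c)))" using rho(3) by auto
  show ?thesis
  proof (intro exI[of _ rho] conjI allI impI)
    show "Cc_inf_Rplus rho" unfolding Cc_inf_Rplus_def using rho by auto
  next
    fix ep em :: "real^2" and th :: real and p pt q qt :: "real \<Rightarrow> real"
    assume geo: "norm ep = 1" "norm em = 1" "ep \<bullet> em = cos (2 * th)" "0 < 2 * th" "2 * th < 2 * pi"
      and C: "C0_inf_Rplus p" "C0_inf_Rplus pt" "C0_inf_Rplus q" "C0_inf_Rplus qt"
    obtain a1 b1 where 1: "0 < a1" "\<And>t. p t \<noteq> 0 \<Longrightarrow> a1 \<le> t \<and> t \<le> b1" using C0_supp[OF C(1)] by blast
    obtain a2 b2 where 2: "0 < a2" "\<And>t. pt t \<noteq> 0 \<Longrightarrow> a2 \<le> t \<and> t \<le> b2" using C0_supp[OF C(2)] by blast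
    obtain a3 b3 where 3: "0 < a3" "\<And>t. q t \<noteq> 0 \<Longrightarrow> a3 \<le> t \<and> t \<le> b3" using C0_supp[OF C(3)] by blast
    obtain a4 b4 where 4: "0 < a4" "\<And>t. qt t \<noteq> 0 \<Longrightarrow> a4 \<le> t \<and> t \<le> b4" using C0_supp[OF C(4)] by blast
    define a where "a = min (min a1 a2) (min a3 a4)"
    define b where "b = max a (max (max b1 b2) (max b3 b4))"
    have ab: "0 < a" "a \<le> b" using 1 2 3 4 by (auto simp: a_def b_def)
    have supp: "\<And>t. p t \<noteq> 0 \<Longrightarrow> t \<in> {a..b}" "\<And>t. pt t \<noteq> 0 \<Longrightarrow> t \<in> {a..b}"
      "\<And>t. q t \<noteq> 0 \<Longrightarrow> t \<in> {a..b}" "\<And>t. qt t \<noteq> 0 \<Longrightarrow> t \<in> {a..b}"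
      using 1(2) 2(2) 3(2) 4(2) by (force simp: a_def b_def)+
    have cont: "continuous_on UNIV rho" "continuous_on UNIV p" "continuous_on UNIV pt"
      "continuous_on UNIV q" "continuous_on UNIV qt"
      using rho(1) C by (auto simp: C0_inf_Rplus_def intro: C_inf_continuous)
    show "A_Gamma_pair c ep em (\<lambda>x. chiD x * Theta_Gamma c ep em p pt x)
                               (\<lambda>x. chiD x * Theta_Gamma c ep em q qt x)
          = A_plus_pair th (\<lambda>t. rho t * p t) (\<lambda>t. rho t * q t)
            + A_minus_pair th (\<lambda>t. rho t * pt t) (\<lambda>t. rho t * qt t)"
      unfolding chiD_eq by (rule main_identity[OF geo cont supp ab])
  qed
qed

end
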